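(* Let $F:\mathbb{R}\to\mathbb{R}$ be a real function whose graph, as a subspace of $\mathbb{R}^2$, is connected and completely metrizable. Let $S$ be the set of all $x\in\mathbb{R}$ at which $F$ is not continuous. Then $S$ is a meager subset of $\mathbb{R}$.
   Context: A real function is identified with its graph $\{(x,F(x)):x\in\mathbb{R}\}\subset\mathbb{R}^2$ with the subspace topology of the Euclidean plane. *)

theory Defs
  imports "HOL-Analysis.Analysis"
begin

definition nowhere_dense :: "'a::topological_space set \<Rightarrow> bool" where
  "nowhere_dense A \<longleftrightarrow> interior (closure A) = {}"

definition meager :: "'a::topological_space set \<Rightarrow> bool" where
  "meager S \<longleftrightarrow> (\<exists>\<F>. countable \<F> \<and> (\<forall>A\<in>\<F>. nowhere_dense A) \<and> S \<subseteq> \<Union>\<F>)"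

definition graph :: "(real \<Rightarrow> real) \<Rightarrow> (real \<times> real) set" where
  "graph F = {(x, F x) | x. True}"

end

theory Submission
  imports Defs
begin

lemma darboux_up:
  fixes F :: "real \<Rightarrow> real"
  assumes conn: "connected (graph F)" and uw: "u < w" and c1: "F u < c" and c2: "c < F w"
  shows "\<exists>v. u < v \<and> v < w \<and> F v = c"
proof (rule ccontr)
  assume na: "\<not> ?thesis"
  define A :: "(real\<times>real) set" where "A = ({..<w} \<times> {..<c}) \<union> ({..<u} \<times> UNIV)"
  define B :: "(real\<times>real) set" where "B = ({u<..} \<times> {c<..}) \<union> ({w<..} \<times> UNIV)"
  have oA: "open A" unfolding A_def by (intro open_Un open_Times) auto
  have oB: "open B" unfolding B_def by (intro open_Un open_Times) auto
  have ne: "F v \<noteq> c" if "u \<le> v" "v \<le> w" for v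
    using na that c1 c2 by (cases "v = u"; cases "v = w") (auto simp: order.order_iff_strict)
  have cov: "graph F \<subseteq> A \<union> B"
  proof
    fix p assume "p \<in> graph F"
    then obtain v where p: "p = (v, F v)" by (auto simp: graph_def)
    show "p \<in> A \<union> B"
    proof (cases "v < u")
      case True then show ?thesis by (auto simp: p A_def)
    next
      case f1: False
      show ?thesis
      proof (cases "w < v")
        case True then show ?thesis by (auto simp: p B_def)
      next
        case False
        with f1 have "F v \<noteq> c" using ne by auto
        show ?thesis
        proof (cases "F v < c")
          case True
          then have "v \<noteq> w" using c2 by auto
          then have "v < w" using False by auto
          then show ?thesis using True by (auto simp: p A_def)
        next
          case f3: False
          then have "c < F v" using \<open>F v \<noteq> c\<close> by auto
          then have "v \<noteq> u" using c1 by auto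
          then have "u < v" using f1 by auto
          then show ?thesis using \<open>c < F v\<close> by (auto simp: p B_def)
        qed
      qed
    qed
  qed
  have dis: "A \<inter> B \<inter> graph F = {}"
    using uw by (auto simp: A_def B_def graph_def)
  have "(u, F u) \<in> A \<inter> graph F" using uw c1 by (auto simp: A_def graph_def)
  moreover have "(w, F w) \<in> B \<inter> graph F" using uw c2 by (auto simp: B_def graph_def)
  ultimately show False using connectedD[OF conn oA oB dis cov] by auto
qed

lemma graph_neg_conn:
  fixes F :: "real \<Rightarrow> real"
  assumes "connected (graph F)"
  shows "connected (graph (\<lambda>x. - F x))"
proof -
  have "graph (\<lambda>x. - F x) = (\<lambda>p. (fst p, - snd p)) ` graph F"
    by (auto simp: graph_def image_def)
  moreover have "continuous_on (graph F) (\<lambda>p. (fst p, - snd p))"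
    by (intro continuous_intros)
  ultimately show ?thesis using connected_continuous_image assms by metis
qed

lemma darboux:
  fixes F :: "real \<Rightarrow> real"
  assumes conn: "connected (graph F)"
    and c: "(F u < c \<and> c < F w) \<or> (F w < c \<and> c < F u)"
  shows "\<exists>v. \<bar>v - u\<bar> \<le> \<bar>w - u\<bar> \<and> F v = c"
proof -
  have conn2: "connected (graph (\<lambda>x. - F x))" using graph_neg_conn[OF conn] .
  have "u \<noteq> w" using c by auto
  then consider "u < w" | "w < u" by linarith
  then show ?thesis
  proof cases
    case 1
    show ?thesis
    proof (cases "F u < c \<and> c < F w")
      case True
      then obtain v where "u < v" "v < w" "F v = c" using darboux_up[OF conn 1] by blast
      then show ?thesis by (intro exI[of _ v]) auto
    next
      case False
      then have "- F u < - c" "- c < - F w" using c by auto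
      then obtain v where "u < v" "v < w" "- F v = - c" using darboux_up[OF conn2 1] by blast
      then show ?thesis by (intro exI[of _ v]) auto
    qed
  next
    case 2
    show ?thesis
    proof (cases "F w < c \<and> c < F u")
      case True
      then obtain v where "w < v" "v < u" "F v = c" using darboux_up[OF conn 2] by blast
      then show ?thesis by (intro exI[of _ v]) auto
    next
      case False
      then have "- F w < - c" "- c < - F u" using c by auto
      then obtain v where "w < v" "v < u" "- F v = - c" using darboux_up[OF conn2 2] by blast
      then show ?thesis by (intro exI[of _ v]) auto
    qed
  qed
qed

lemma seg_closure:
  fixes F :: "real \<Rightarrow> real"
  assumes conn: "connected (graph F)"
    and h: "\<And>\<delta>. \<delta> > 0 \<Longrightarrow> \<exists>w. \<bar>w - x\<bar> < \<delta> \<and> ((F x < c \<and> c < F w) \<or> (F w < c \<and> c < F x))"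
  shows "(x, c) \<in> closure (graph F)"
  unfolding closure_approachable
proof (intro allI impI)
  fix e :: real assume "e > 0"
  then obtain w where w: "\<bar>w - x\<bar> < e" "(F x < c \<and> c < F w) \<or> (F w < c \<and> c < F x)" using h by blast
  then obtain v where v: "\<bar>v - x\<bar> \<le> \<bar>w - x\<bar>" "F v = c" using darboux[OF conn] by blast
  have "(v, c) \<in> graph F" using v by (auto simp: graph_def)
  moreover have "dist (v, c) (x, c) < e" using v w by (simp add: dist_Pair_Pair dist_real_def)
  ultimately show "\<exists>y\<in>graph F. dist y (x, c) < e" by blast
qed

lemma baire_real:
  fixes \<G> :: "real set set"
  assumes "countable \<G>" "\<And>T. T \<in> \<G> \<Longrightarrow> closed T" "open U" "U \<noteq> {}" "U \<subseteq> \<Union>\<G>"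
  shows "\<exists>T\<in>\<G>. interior T \<noteq> {}"
proof (rule ccontr)
  assume "\<not> ?thesis"
  then have "euclidean interior_of \<Union>\<G> = {}"
    using assms by (intro Baire_category_alt) (auto simp: completely_metrizable_space_euclidean)
  moreover have "U \<subseteq> interior (\<Union>\<G>)" using assms interior_maximal by blast
  ultimately show False using assms by auto
qed

lemma closed_fibre_all:
  fixes C :: "(real \<times> real) set"
  assumes "closed C"
  shows "closed {x. \<forall>y\<in>{a..b}. (x, y) \<in> C}"
proof -
  have "{x. \<forall>y\<in>{a..b}. (x, y) \<in> C} = (\<Inter>y\<in>{a..b}. (\<lambda>x. (x, y)) -` C)" by auto
  moreover have "closed ((\<lambda>x. (x, y)) -` C)" for y
    by (rule continuous_closed_vimage[OF assms]) (intro continuous_intros)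
  ultimately show ?thesis by (auto intro: closed_INT)
qed


lemma key_fibre:
  fixes F :: "real \<Rightarrow> real" and \<K> :: "(real \<times> real) set set"
  assumes conn: "connected (graph F)" and cK: "countable \<K>"
    and clK: "\<And>K. K \<in> \<K> \<Longrightarrow> closed K" and UK: "\<Union>\<K> = - graph F"
    and ep: "\<epsilon> > 0"
    and osc: "\<And>\<delta>. \<delta> > 0 \<Longrightarrow> \<exists>y z. \<bar>y - x\<bar> < \<delta> \<and> \<bar>z - x\<bar> < \<delta> \<and> \<epsilon> \<le> \<bar>F y - F z\<bar>"
  shows "\<exists>K\<in>\<K>. \<exists>a\<in>\<rat>. \<exists>b\<in>\<rat>. a < b \<and> (\<forall>y\<in>{a..b}. (x, y) \<in> K \<inter> closure (graph F))"
proof -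
  have h1: "\<exists>w. \<bar>w - x\<bar> < \<delta> \<and> \<epsilon>/2 \<le> \<bar>F w - F x\<bar>" if dpos: "\<delta> > 0" for \<delta>
  proof -
    obtain y z where "\<bar>y - x\<bar> < \<delta>" "\<bar>z - x\<bar> < \<delta>" "\<epsilon> \<le> \<bar>F y - F z\<bar>" using osc[OF dpos] by blast
    then show ?thesis
    proof (cases "\<epsilon>/2 \<le> \<bar>F y - F x\<bar>")
      case True
      then show ?thesis using \<open>\<bar>y - x\<bar> < \<delta>\<close> by blast
    next
      case False
      then have "\<epsilon>/2 \<le> \<bar>F z - F x\<bar>" using \<open>\<epsilon> \<le> \<bar>F y - F z\<bar>\<close> by linarith
      then show ?thesis using \<open>\<bar>z - x\<bar> < \<delta>\<close> by blast
    qed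
  qed
  define P where "P \<delta> \<longleftrightarrow> (\<exists>w. \<bar>w - x\<bar> < \<delta> \<and> F x + \<epsilon>/2 \<le> F w)" for \<delta>
  define N where "N \<delta> \<longleftrightarrow> (\<exists>w. \<bar>w - x\<bar> < \<delta> \<and> F w \<le> F x - \<epsilon>/2)" for \<delta>
  have PN: "P \<delta> \<or> N \<delta>" if dp: "\<delta> > 0" for \<delta>
  proof -
    obtain w where w: "\<bar>w - x\<bar> < \<delta>" "\<epsilon>/2 \<le> \<bar>F w - F x\<bar>" using h1[OF dp] by blast
    show ?thesis
    proof (cases "F x \<le> F w")
      case True
      then have "F x + \<epsilon>/2 \<le> F w" using w(2) by linarith
      then show ?thesis unfolding P_def using w(1) by blast
    next
      case False
      then have "F w \<le> F x - \<epsilon>/2" using w(2) by linarith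
      then show ?thesis unfolding N_def using w(1) by blast
    qed
  qed
  have dich: "(\<forall>\<delta>>0. P \<delta>) \<or> (\<forall>\<delta>>0. N \<delta>)"
  proof (rule ccontr)
    assume "\<not> ?thesis"
    then obtain d1 d2 where d: "d1 > 0" "\<not> P d1" "d2 > 0" "\<not> N d2" by auto
    then have "P (min d1 d2) \<or> N (min d1 d2)" using PN by auto
    then show False using d unfolding P_def N_def by auto
  qed
  obtain a0 b0 where ab0: "a0 < b0" "\<And>c. a0 < c \<Longrightarrow> c < b0 \<Longrightarrow> (x, c) \<in> closure (graph F)"
    "\<not> (a0 < F x \<and> F x < b0)"
  proof (cases "\<forall>\<delta>>0. P \<delta>")
    case True
    show ?thesis
    proof (rule that[of "F x" "F x + \<epsilon>/2"])
      fix c assume c: "F x < c" "c < F x + \<epsilon>/2"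
      show "(x, c) \<in> closure (graph F)"
      proof (rule seg_closure[OF conn])
        fix \<delta> :: real assume "\<delta> > 0"
        then obtain w where "\<bar>w - x\<bar> < \<delta>" "F x + \<epsilon>/2 \<le> F w" using True P_def by auto
        then show "\<exists>w. \<bar>w - x\<bar> < \<delta> \<and> ((F x < c \<and> c < F w) \<or> (F w < c \<and> c < F x))"
          using c by (intro exI[of _ w]) auto
      qed
    qed (use ep in auto)
  next
    case False
    then have NN: "\<forall>\<delta>>0. N \<delta>" using dich by auto
    show ?thesis
    proof (rule that[of "F x - \<epsilon>/2" "F x"])
      fix c assume c: "F x - \<epsilon>/2 < c" "c < F x"
      show "(x, c) \<in> closure (graph F)"
      proof (rule seg_closure[OF conn])
        fix \<delta> :: real assume "\<delta> > 0"
        then obtain w where "\<bar>w - x\<bar> < \<delta>" "F w \<le> F x - \<epsilon>/2" using NN N_def by auto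
        then show "\<exists>w. \<bar>w - x\<bar> < \<delta> \<and> ((F x < c \<and> c < F w) \<or> (F w < c \<and> c < F x))"
          using c by (intro exI[of _ w]) auto
      qed
    qed (use ep in auto)
  qed
  define a1 where "a1 = (2*a0 + b0)/3"
  define b1 where "b1 = (a0 + 2*b0)/3"
  have a1b1: "a0 < a1" "a1 < b1" "b1 < b0" using ab0(1) by (auto simp: a1_def b1_def)
  define \<G> where "\<G> = (\<lambda>K. {y. (x, y) \<in> K} \<inter> {a1..b1}) ` \<K>"
  have "\<exists>T\<in>\<G>. interior T \<noteq> {}"
  proof (rule baire_real[of \<G> "{a1<..<b1}"])
    show "countable \<G>" using cK by (simp add: \<G>_def)
    show "closed T" if TG: "T \<in> \<G>" for T
    proof -
      obtain K where K: "K \<in> \<K>" "T = {y. (x, y) \<in> K} \<inter> {a1..b1}" using TG \<G>_def by auto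
      have "closed (Pair x -` K)"
        by (rule continuous_closed_vimage[OF clK[OF K(1)]]) (intro continuous_intros)
      moreover have "{y. (x, y) \<in> K} = Pair x -` K" by auto
      ultimately show ?thesis using K by (auto intro: closed_Int)
    qed
    show "{a1<..<b1} \<noteq> {}" using a1b1 by auto
    show "{a1<..<b1} \<subseteq> \<Union>\<G>"
    proof
      fix y assume y: "y \<in> {a1<..<b1}"
      then have "y \<noteq> F x" using ab0(3) a1b1 by auto
      then have "(x, y) \<notin> graph F" by (auto simp: graph_def)
      then obtain K where "K \<in> \<K>" "(x, y) \<in> K" using UK by blast
      then show "y \<in> \<Union>\<G>" using y unfolding \<G>_def by auto
    qed
  qed auto
  then obtain K where K: "K \<in> \<K>" "interior ({y. (x, y) \<in> K} \<inter> {a1..b1}) \<noteq> {}"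
    unfolding \<G>_def by auto
  then obtain p where "p \<in> interior ({y. (x, y) \<in> K} \<inter> {a1..b1})" by blast
  then obtain e where e: "e > 0" "ball p e \<subseteq> {y. (x, y) \<in> K} \<inter> {a1..b1}"
    using mem_interior by blast
  obtain a where a: "a \<in> \<rat>" "p - e < a" "a < p" using Rats_dense_in_real[of "p - e" p] e by auto
  obtain b where b: "b \<in> \<rat>" "p < b" "b < p + e" using Rats_dense_in_real[of p "p + e"] e by auto
  have "(x, y) \<in> K \<inter> closure (graph F)" if "y \<in> {a..b}" for y
  proof -
    have "y \<in> ball p e" using that a b by (auto simp: dist_real_def)
    then have "(x, y) \<in> K" "a1 \<le> y" "y \<le> b1" using e by auto
    moreover have "(x, y) \<in> closure (graph F)"
      using ab0(2) a1b1 \<open>a1 \<le> y\<close> \<open>y \<le> b1\<close> by auto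
    ultimately show ?thesis by auto
  qed
  then show ?thesis using K(1) a b by (intro bexI[of _ K] bexI[of _ a] bexI[of _ b]) auto
qed


theorem theorem2:
  fixes F :: "real \<Rightarrow> real"
  assumes "connected (graph F)"
    and "completely_metrizable_space (top_of_set (graph F))"
  shows "meager {x. \<not> isCont F x}"
proof -
  note conn = assms(1)
  have "gdelta_in euclidean (graph F)"
    using completely_metrizable_space_imp_gdelta_in[OF metrizable_space_euclidean, of "graph F"] assms(2)
    by simp
  then obtain \<U> where U: "countable \<U>" "\<And>U. U \<in> \<U> \<Longrightarrow> open U" "\<Inter>\<U> = graph F"
    by (auto simp: gdelta_in_alt intersection_of_def)
  define \<K> where "\<K> = uminus ` \<U>"
  have cK: "countable \<K>" using U by (simp add: \<K>_def)
  have clK: "closed K" if "K \<in> \<K>" for K using that U(2) by (auto simp: \<K>_def)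
  have UK: "\<Union>\<K> = - graph F" using U(3) by (auto simp: \<K>_def)
  define Sn where "Sn n = {x. \<forall>\<delta>>0. \<exists>y z. \<bar>y - x\<bar> < \<delta> \<and> \<bar>z - x\<bar> < \<delta> \<and> 1 / real (Suc n) \<le> \<bar>F y - F z\<bar>}" for n
  have oscS: "\<exists>y z. \<bar>y - x\<bar> < \<delta> \<and> \<bar>z - x\<bar> < \<delta> \<and> 1 / real (Suc n) \<le> \<bar>F y - F z\<bar>"
    if x: "x \<in> closure (Sn n)" and d: "\<delta> > 0" for x n \<delta>
  proof -
    have d2: "\<delta>/2 > 0" using d by simp
    obtain s where s: "s \<in> Sn n" "dist s x < \<delta>/2"
      using x d2 unfolding closure_approachable by blast
    have "\<forall>\<delta>>0. \<exists>y z. \<bar>y - s\<bar> < \<delta> \<and> \<bar>z - s\<bar> < \<delta> \<and> 1 / real (Suc n) \<le> \<bar>F y - F z\<bar>"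
      using s(1) unfolding Sn_def by blast
    then obtain y z where yz: "\<bar>y - s\<bar> < \<delta>/2" "\<bar>z - s\<bar> < \<delta>/2" "1 / real (Suc n) \<le> \<bar>F y - F z\<bar>"
      using d2 by blast
    have "\<bar>s - x\<bar> < \<delta>/2" using s(2) by (simp add: dist_real_def)
    then have "\<bar>y - x\<bar> < \<delta>" "\<bar>z - x\<bar> < \<delta>" using yz by linarith+
    then show ?thesis using yz(3) by blast
  qed
  have nd: "nowhere_dense (closure (Sn n))" for n
    unfolding nowhere_dense_def closure_closure
  proof (rule ccontr)
    assume "interior (closure (Sn n)) \<noteq> {}"
    then obtain x0 where "x0 \<in> interior (closure (Sn n))" by blast
    then obtain r where r: "r > 0" "ball x0 r \<subseteq> closure (Sn n)" using mem_interior by blast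
    define I :: "((real \<times> real) set \<times> real \<times> real) set" where "I = {(K, a, b). K \<in> \<K> \<and> a \<in> \<rat> \<and> b \<in> \<rat> \<and> a < b}"
    define X where "X = (\<lambda>(K, a, b). {x. \<forall>y\<in>{a..b}. (x, y) \<in> K \<inter> closure (graph F)})"
    have "\<exists>T\<in>X ` I. interior T \<noteq> {}"
    proof (rule baire_real[of _ "ball x0 r"])
      have "I \<subseteq> \<K> \<times> (\<rat> \<times> \<rat>)" by (auto simp: I_def)
      moreover have "countable (\<K> \<times> (\<rat> \<times> \<rat>))" by (intro countable_SIGMA cK countable_rat)
      ultimately have "countable I" by (rule countable_subset)
      then show "countable (X ` I)" by (rule countable_image)
      show "closed T" if TX: "T \<in> X ` I" for T
      proof -
        obtain K a b where "K \<in> \<K>" "T = X (K, a, b)" using TX by (auto simp: I_def)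
        moreover have "closed (K \<inter> closure (graph F))" using clK[OF \<open>K \<in> \<K>\<close>] by (simp add: closed_Int)
        ultimately show ?thesis unfolding X_def using closed_fibre_all[of "K \<inter> closure (graph F)" a b] by simp
      qed
      show "ball x0 r \<subseteq> \<Union> (X ` I)"
      proof
        fix x assume "x \<in> ball x0 r"
        then have xc: "x \<in> closure (Sn n)" using r by auto
        obtain K a b where "K \<in> \<K>" "a \<in> \<rat>" "b \<in> \<rat>" "a < b"
          "\<forall>y\<in>{a..b}. (x, y) \<in> K \<inter> closure (graph F)"
          using key_fibre[OF conn cK clK UK, of "1 / real (Suc n)" x] oscS[OF xc] by auto
        then show "x \<in> \<Union> (X ` I)" unfolding X_def I_def
          by (intro UnionI[of "X (K, a, b)"]) (auto simp: X_def)
      qed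
    qed (use r in auto)
    then obtain K a b where i: "K \<in> \<K>" "a \<in> \<rat>" "b \<in> \<rat>" "a < b"
      and int: "interior (X (K, a, b)) \<noteq> {}" by (auto simp: I_def)
    then obtain c where "c \<in> interior (X (K, a, b))" by blast
    then obtain e where e: "e > 0" "ball c e \<subseteq> X (K, a, b)" using mem_interior by blast
    define m where "m = (a + b) / 2"
    have "c \<in> X (K, a, b)" using e by (meson centre_in_ball subsetD)
    moreover have "m \<in> {a..b}" using i(4) by (simp add: m_def)
    ultimately have "(c, m) \<in> K \<inter> closure (graph F)" unfolding X_def by blast
    moreover have "min e ((b - a) / 2) > 0" using e i by simp
    ultimately obtain g where g: "g \<in> graph F" "dist g (c, m) < min e ((b - a) / 2)"
      using closure_approachable[of "(c, m)" "graph F"] by blast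
    obtain x' where x': "g = (x', F x')" using g(1) by (auto simp: graph_def)
    have "dist x' c \<le> dist g (c, m)" "dist (F x') m \<le> dist g (c, m)"
      using dist_fst_le[of g "(c, m)"] dist_snd_le[of g "(c, m)"] x' by auto
    then have d1: "dist x' c < e" "\<bar>F x' - m\<bar> < (b - a) / 2"
      using g(2) by (auto simp: dist_real_def)
    then have "x' \<in> ball c e" by (simp add: dist_commute)
    then have xX: "x' \<in> X (K, a, b)" using e by blast
    have "F x' \<in> {a..b}" using d1(2) unfolding m_def abs_less_iff by (simp add: field_simps)
    then have "(x', F x') \<in> K" using xX unfolding X_def by blast
    then show False using i(1) UK x' g(1) by auto
  qed
  have sub: "{x. \<not> isCont F x} \<subseteq> (\<Union>n. closure (Sn n))"
  proof
    fix x assume "x \<in> {x. \<not> isCont F x}"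
    then obtain e where e: "e > 0" "\<forall>d>0. \<exists>y. dist y x < d \<and> \<not> dist (F y) (F x) < e"
      unfolding continuous_at_eps_delta by auto
    obtain k where k: "k > 0" "inverse (real k) < e" using ex_inverse_of_nat_less[OF e(1)] by blast
    have "inverse (real (Suc k)) \<le> inverse (real k)" using k(1) by (simp add: le_imp_inverse_le)
    then have n: "inverse (real (Suc k)) < e" using k(2) by linarith
    have "x \<in> Sn k" unfolding Sn_def
    proof (intro CollectI allI impI)
      fix \<delta> :: real assume "\<delta> > 0"
      then obtain y where "dist y x < \<delta>" "\<not> dist (F y) (F x) < e" using e by auto
      then show "\<exists>y z. \<bar>y - x\<bar> < \<delta> \<and> \<bar>z - x\<bar> < \<delta> \<and> 1 / real (Suc k) \<le> \<bar>F y - F z\<bar>"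
        using n \<open>\<delta> > 0\<close> by (intro exI[of _ y] exI[of _ x]) (auto simp: dist_real_def inverse_eq_divide)
    qed
    then show "x \<in> (\<Union>n. closure (Sn n))" using closure_subset by blast
  qed
  show ?thesis unfolding meager_def
    by (intro exI[of _ "range (\<lambda>n. closure (Sn n))"]) (use nd sub in auto)
qed

end
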